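(* Let $\mathcal T$ be a good triangulation of $\mathcal C_G$ for an arbitrary multigraph $G=(V,E)$. Let $E_1,D\subseteq E$ be disjoint subsets such that the graph $(V,D)$ contains no cycle (in particular no loops), and for each $f\in D$ choose $p_f\in\{\overleftarrow e_f,\overrightarrow e_f\}$. Then there exists a unique maximal simplex $S\in\mathcal T$ with $\widetilde E(S)=E_1$, $D(S)=D$ and $p_f\in S$ for all $f\in D$. Moreover, every maximal simplex of $\mathcal T$ arises in this way (i.e. for every maximal $S\in\mathcal T$ the graph $(V,D(S))$ is acyclic).
   Context: For a finite undirected multigraph $G=(V,E)$ (loops, parallel edges and isolated nodes allowed) with $n=|V|$, $m=|E|$, work in $\mathbb{R}^V\times\mathbb{R}^E\cong\mathbb{R}^{n+m}$ with standard basis vectors $e_u$ ($u\in V$), $e_f$ ($f\in E$). Fix for each edge $f$ an ordering $(u,v)$ of its endpoints ($u=v$ for a loop) and set $\widetilde e_f=e_u+e_v-e_f$, $\overleftarrow e_f=e_u-e_v+e_f$, $\overrightarrow e_f=-e_u+e_v+e_f$ (so for a loop $\overleftarrow e_f=\overrightarrow e_f=e_f$). The cosmological polytope $\mathcal C_G$ is the convex hull of $\{e_f,\widetilde e_f,\overleftarrow e_f,\overrightarrow e_f: f\in E\}\cup\{e_u: u\in V\}$; these are exactly its lattice points, and it is an $(n+m-1)$-dimensional polytope in the hyperplane $\sum_i x_i=1$. A good triangulation of $\mathcal C_G$ is a regular triangulation (induced by a height function on the lattice points of $\mathcal C_G$) whose vertex set is the set of all lattice points of $\mathcal C_G$ and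 which contains the standard simplex $\mathrm{conv}\{e_u,e_f: u\in V, f\in E\}$ as a maximal cell; simplices are identified with their vertex sets. For a simplex $S\in\mathcal T$: the selected nodes are $V(S)=\{u\in V: e_u\in S\}$; the squiggly edges $\widetilde E(S)=\{f:\widetilde e_f\in S\}$; the selected edges $\widehat E(S)=\{f: e_f\in S\}$; for non-loop edges $f$, $f\in\overleftarrow E(S)$ iff $\overleftarrow e_f\in S$ and $f\in\overrightarrow E(S)$ iff $\overrightarrow e_f\in S$ (loops are never in $\overleftarrow E(S)\cup\overrightarrow E(S)$); the double edges are $D(S)=(\overleftarrow E(S)\cup\overrightarrow E(S))\cap\widehat E(S)$. *)

theory Defs
  imports Complex_Main
begin

text \<open>A multigraph: finite vertex set V, finite edge set E, and for every edge f a fixed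
  ordering (src f, tgt f) of its endpoints (src f = tgt f for a loop).\<close>

type_synonym ('v,'e) pt = "('v + 'e) \<Rightarrow> real"

definition unitv :: "('v + 'e) \<Rightarrow> ('v,'e) pt" where
  "unitv i = (\<lambda>j. if j = i then 1 else 0)"

definition eV :: "'v \<Rightarrow> ('v,'e) pt" where "eV u = unitv (Inl u)"
definition eE :: "'e \<Rightarrow> ('v,'e) pt" where "eE f = unitv (Inr f)"

definition eTil :: "('e \<Rightarrow> 'v) \<Rightarrow> ('e \<Rightarrow> 'v) \<Rightarrow> 'e \<Rightarrow> ('v,'e) pt" where
  "eTil src tgt f = (\<lambda>j. eV (src f) j + eV (tgt f) j - eE f j)"
definition eLeft :: "('e \<Rightarrow> 'v) \<Rightarrow> ('e \<Rightarrow> 'v) \<Rightarrow> 'e \<Rightarrow> ('v,'e) pt" where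
  "eLeft src tgt f = (\<lambda>j. eV (src f) j - eV (tgt f) j + eE f j)"
definition eRight :: "('e \<Rightarrow> 'v) \<Rightarrow> ('e \<Rightarrow> 'v) \<Rightarrow> 'e \<Rightarrow> ('v,'e) pt" where
  "eRight src tgt f = (\<lambda>j. - eV (src f) j + eV (tgt f) j + eE f j)"

definition cosmo_points :: "'v set \<Rightarrow> 'e set \<Rightarrow> ('e \<Rightarrow> 'v) \<Rightarrow> ('e \<Rightarrow> 'v) \<Rightarrow> ('v,'e) pt set" where
  "cosmo_points V E src tgt =
     eV ` V \<union> (\<Union>f\<in>E. {eE f, eTil src tgt f, eLeft src tgt f, eRight src tgt f})"

definition aff_indep :: "('v,'e) pt set \<Rightarrow> bool" where
  "aff_indep S \<longleftrightarrow> finite S \<and>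
     (\<forall>c :: ('v,'e) pt \<Rightarrow> real. (\<Sum>p\<in>S. c p) = 0 \<and> (\<forall>j. (\<Sum>p\<in>S. c p * p j) = 0)
        \<longrightarrow> (\<forall>p\<in>S. c p = 0))"

text \<open>Cells of the regular subdivision of the point configuration A induced by the height
  function h: the (vertex sets of the) lower faces of the lifted configuration, i.e. the sets
  of points where some affine functional lies below h on A with equality exactly there.\<close>
definition regular_subdivision ::
  "'v set \<Rightarrow> 'e set \<Rightarrow> ('v,'e) pt set \<Rightarrow> (('v,'e) pt \<Rightarrow> real) \<Rightarrow> ('v,'e) pt set set" where
  "regular_subdivision V E A h =
     {S. \<exists>(c :: ('v + 'e) \<Rightarrow> real) (d :: real).
            (\<forall>p\<in>A. (\<Sum>i\<in>Inl ` V \<union> Inr ` E. c i * p i) + d \<le> h p) \<and>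
            S = {p\<in>A. (\<Sum>i\<in>Inl ` V \<union> Inr ` E. c i * p i) + d = h p}}"

definition maximal_cell :: "'a set set \<Rightarrow> 'a set \<Rightarrow> bool" where
  "maximal_cell T S \<longleftrightarrow> S \<in> T \<and> \<not> (\<exists>S'\<in>T. S \<subset> S')"

text \<open>A good triangulation: regular triangulation (all cells simplices) using all lattice
  points as vertices, containing the standard simplex as a maximal cell.\<close>
definition good_triangulation ::
  "'v set \<Rightarrow> 'e set \<Rightarrow> ('e \<Rightarrow> 'v) \<Rightarrow> ('e \<Rightarrow> 'v) \<Rightarrow> ('v,'e) pt set set \<Rightarrow> bool" where
  "good_triangulation V E src tgt T \<longleftrightarrow>
     (\<exists>h. T = regular_subdivision V E (cosmo_points V E src tgt) h) \<and>
     (\<forall>S\<in>T. aff_indep S) \<and>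
     \<Union>T = cosmo_points V E src tgt \<and>
     maximal_cell T (eV ` V \<union> eE ` E)"

definition squiggly :: "'e set \<Rightarrow> ('e \<Rightarrow> 'v) \<Rightarrow> ('e \<Rightarrow> 'v) \<Rightarrow> ('v,'e) pt set \<Rightarrow> 'e set" where
  "squiggly E src tgt S = {f\<in>E. eTil src tgt f \<in> S}"
definition selected_edges :: "'e set \<Rightarrow> ('v,'e) pt set \<Rightarrow> 'e set" where
  "selected_edges E S = {f\<in>E. eE f \<in> S}"
definition left_edges :: "'e set \<Rightarrow> ('e \<Rightarrow> 'v) \<Rightarrow> ('e \<Rightarrow> 'v) \<Rightarrow> ('v,'e) pt set \<Rightarrow> 'e set" where
  "left_edges E src tgt S = {f\<in>E. src f \<noteq> tgt f \<and> eLeft src tgt f \<in> S}"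
definition right_edges :: "'e set \<Rightarrow> ('e \<Rightarrow> 'v) \<Rightarrow> ('e \<Rightarrow> 'v) \<Rightarrow> ('v,'e) pt set \<Rightarrow> 'e set" where
  "right_edges E src tgt S = {f\<in>E. src f \<noteq> tgt f \<and> eRight src tgt f \<in> S}"
definition double_edges :: "'e set \<Rightarrow> ('e \<Rightarrow> 'v) \<Rightarrow> ('e \<Rightarrow> 'v) \<Rightarrow> ('v,'e) pt set \<Rightarrow> 'e set" where
  "double_edges E src tgt S =
     (left_edges E src tgt S \<union> right_edges E src tgt S) \<inter> selected_edges E S"

text \<open>A cycle in the multigraph with edge set D: a closed walk v0 -e0- v1 -e1- ... -e(k-1)- v0
  with k \<ge> 1, pairwise distinct edges and pairwise distinct vertices (k = 1: a loop,
  k = 2: two parallel edges).\<close>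
definition has_cycle :: "('e \<Rightarrow> 'v) \<Rightarrow> ('e \<Rightarrow> 'v) \<Rightarrow> 'e set \<Rightarrow> bool" where
  "has_cycle src tgt D \<longleftrightarrow>
     (\<exists>es vs. es \<noteq> [] \<and> length vs = length es \<and> distinct es \<and> distinct vs \<and> set es \<subseteq> D \<and>
        (\<forall>i < length es. {src (es ! i), tgt (es ! i)} = {vs ! i, vs ! ((i + 1) mod length es)}))"

end

theory Submission
  imports Defs
begin


definition Lk :: "('v + 'e) set \<Rightarrow> (('v + 'e) \<Rightarrow> real) \<Rightarrow> ('v,'e) pt \<Rightarrow> real" where
  "Lk I k p = (\<Sum>i\<in>I. k i * p i)"

lemma eV_app: "eV u j = (if j = Inl u then 1 else 0)" by (simp add: eV_def unitv_def)
lemma eE_app: "eE f j = (if j = Inr f then 1 else 0)" by (simp add: eE_def unitv_def)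

lemma Lk_unit: "finite I \<Longrightarrow> Lk I k (unitv a) = (if a \<in> I then k a else 0)"
  unfolding Lk_def unitv_def by (simp add: if_distrib sum.delta' cong: if_cong)

lemma Lk_add: "Lk I k (\<lambda>j. x j + y j) = Lk I k x + Lk I k y"
  unfolding Lk_def by (simp add: distrib_left sum.distrib)
lemma Lk_diff: "Lk I k (\<lambda>j. x j - y j) = Lk I k x - Lk I k y"
  unfolding Lk_def by (simp add: right_diff_distrib sum_subtractf)
lemma Lk_neg: "Lk I k (\<lambda>j. - x j) = - Lk I k x"
  unfolding Lk_def by (simp add: sum_negf)
lemma Lk_lin: "Lk I (\<lambda>i. k i + e * z i) p = Lk I k p + e * Lk I z p"
  unfolding Lk_def by (simp add: algebra_simps sum.distrib sum_distrib_left)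
lemma Lk_negk: "Lk I (\<lambda>i. - z i) p = - Lk I z p"
  unfolding Lk_def by (simp add: sum_negf)
lemma Lk_cong: "(\<And>i. i \<in> I \<Longrightarrow> k i = k' i) \<Longrightarrow> Lk I k p = Lk I k' p"
  unfolding Lk_def by simp

lemma eTil_app: "eTil src tgt f j = eV (src f) j + eV (tgt f) j - eE f j" by (simp add: eTil_def)
lemma eLeft_app: "eLeft src tgt f j = eV (src f) j - eV (tgt f) j + eE f j" by (simp add: eLeft_def)
lemma eRight_app: "eRight src tgt f j = - eV (src f) j + eV (tgt f) j + eE f j" by (simp add: eRight_def)

lemma eLeft_loop: "src f = tgt f \<Longrightarrow> eLeft src tgt f = eE f"
  by (rule ext) (simp add: eLeft_app)
lemma eRight_loop: "src f = tgt f \<Longrightarrow> eRight src tgt f = eE f"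
  by (rule ext) (simp add: eRight_app)

lemma eLeft_neg: "src f \<noteq> tgt f \<Longrightarrow> eLeft src tgt f (Inl (tgt f)) = -1"
  by (simp add: eLeft_app eV_app eE_app)
lemma eRight_neg: "src f \<noteq> tgt f \<Longrightarrow> eRight src tgt f (Inl (src f)) = -1"
  by (simp add: eRight_app eV_app eE_app)
lemma eTil_neg: "eTil src tgt f (Inr f) = -1"
  by (simp add: eTil_app eV_app eE_app)

lemma eLeft_ne_eV: "src f \<noteq> tgt f \<Longrightarrow> eLeft src tgt f \<noteq> eV u"
  using eLeft_neg[of src f tgt] by (auto simp: eV_app split: if_splits)
lemma eLeft_ne_eE: "src f \<noteq> tgt f \<Longrightarrow> eLeft src tgt f \<noteq> eE g"
  using eLeft_neg[of src f tgt] by (auto simp: eE_app split: if_splits)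
lemma eRight_ne_eV: "src f \<noteq> tgt f \<Longrightarrow> eRight src tgt f \<noteq> eV u"
  using eRight_neg[of src f tgt] by (auto simp: eV_app split: if_splits)
lemma eRight_ne_eE: "src f \<noteq> tgt f \<Longrightarrow> eRight src tgt f \<noteq> eE g"
  using eRight_neg[of src f tgt] by (auto simp: eE_app split: if_splits)
lemma eV_ne_eE: "eV u \<noteq> eE g"
proof
  assume "eV u = eE g" from fun_cong[OF this, of "Inl u"] show False by (simp add: eV_app eE_app)
qed
lemma eE_inj: "eE f = eE g \<Longrightarrow> f = g"
proof -
  assume "eE f = eE g" from fun_cong[OF this, of "Inr f"] show ?thesis by (simp add: eE_app split: if_splits)
qed
lemma eV_inj: "eV f = eV g \<Longrightarrow> f = g"
proof -
  assume "eV f = eV g" from fun_cong[OF this, of "Inl f"] show ?thesis by (simp add: eV_app split: if_splits)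
qed



definition adj :: "('e \<Rightarrow> 'v) \<Rightarrow> ('e \<Rightarrow> 'v) \<Rightarrow> 'e set \<Rightarrow> 'v \<Rightarrow> 'v \<Rightarrow> bool" where
  "adj src tgt D x y \<longleftrightarrow> (\<exists>f\<in>D. (src f = x \<and> tgt f = y) \<or> (src f = y \<and> tgt f = x))"

abbreviation reach where "reach src tgt D \<equiv> (adj src tgt D)\<^sup>*\<^sup>*"

lemma adj_sym: "adj src tgt D x y \<Longrightarrow> adj src tgt D y x"
  unfolding adj_def by blast

lemma reach_sym: "reach src tgt D x y \<Longrightarrow> reach src tgt D y x"
proof (induction rule: rtranclp_induct)
  case base then show ?case by simp
next
  case (step y z)
  then show ?case by (meson adj_sym converse_rtranclp_into_rtranclp)
qed

lemma reach_edge: "f \<in> D \<Longrightarrow> reach src tgt D (src f) (tgt f)"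
  by (rule r_into_rtranclp) (auto simp: adj_def)

lemma reach_mono: assumes "D \<subseteq> D'" "reach src tgt D x y" shows "reach src tgt D' x y"
  using assms(2) by (induction rule: rtranclp_induct) (use assms(1) in \<open>auto simp: adj_def intro: rtranclp.rtrancl_into_rtrancl\<close>)

lemma reach_const:
  assumes "\<forall>f\<in>D. g (src f) = g (tgt f)" "reach src tgt D x y"
  shows "g x = g y"
  using assms(2) by (induction rule: rtranclp_induct) (use assms(1) in \<open>auto simp: adj_def\<close>)

lemma reach_V:
  assumes "\<forall>f\<in>D. src f \<in> V \<and> tgt f \<in> V" "reach src tgt D x y" "x \<in> V"
  shows "y \<in> V"
  using assms(2,3) by (induction rule: rtranclp_induct) (use assms(1) in \<open>auto simp: adj_def\<close>)

lemma simple_path: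
  assumes "reach src tgt D x y"
  shows "\<exists>vs es. length vs = length es + 1 \<and> vs ! 0 = x \<and> vs ! length es = y \<and> distinct vs
     \<and> distinct es \<and> set es \<subseteq> D \<and> (\<forall>i<length es. {src (es!i), tgt (es!i)} = {vs!i, vs!Suc i})"
  using assms
proof (induction rule: rtranclp_induct)
  case base
  show ?case by (rule exI[of _ "[x]"], rule exI[of _ "[]"]) simp
next
  case (step y z)
  then obtain vs es where P: "length vs = length es + 1" "vs ! 0 = x" "vs ! length es = y" "distinct vs"
     "distinct es" "set es \<subseteq> D" "\<forall>i<length es. {src (es!i), tgt (es!i)} = {vs!i, vs!Suc i}" by blast
  from step(2) obtain g where g: "g \<in> D" "{src g, tgt g} = {y, z}" unfolding adj_def by blast
  show ?case
  proof (cases "z \<in> set vs")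
    case True
    then obtain j where j: "j < length vs" "vs ! j = z" by (auto simp: in_set_conv_nth)
    show ?thesis
    proof (rule exI[of _ "take (Suc j) vs"], rule exI[of _ "take j es"], intro conjI)
      show "length (take (Suc j) vs) = length (take j es) + 1" using j P(1) by simp
      show "take (Suc j) vs ! 0 = x" using P(2) by simp
      show "take (Suc j) vs ! length (take j es) = z" using j P(1) by simp
      show "distinct (take (Suc j) vs)" using P(4) by simp
      show "distinct (take j es)" using P(5) by simp
      show "set (take j es) \<subseteq> D" using P(6) set_take_subset by fast
      show "\<forall>i<length (take j es). {src (take j es ! i), tgt (take j es ! i)} = {take (Suc j) vs ! i, take (Suc j) vs ! Suc i}"
        using P(7) j P(1) by auto
    qed
  next
    case False
    have gn: "g \<notin> set es"
    proof
      assume "g \<in> set es"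
      then obtain i where i: "i < length es" "es ! i = g" by (auto simp: in_set_conv_nth)
      with P(7) g have "{y, z} = {vs!i, vs!Suc i}" by auto
      moreover have "vs!i \<in> set vs" "vs!Suc i \<in> set vs" using i P(1) by auto
      ultimately have "z \<in> set vs" by (metis insertCI insertE singletonD)
      with False show False by simp
    qed
    show ?thesis
    proof (rule exI[of _ "vs @ [z]"], rule exI[of _ "es @ [g]"], intro conjI)
      show "length (vs @ [z]) = length (es @ [g]) + 1" using P(1) by simp
      show "(vs @ [z]) ! 0 = x" using P(1,2) by (simp add: nth_append)
      show "(vs @ [z]) ! length (es @ [g]) = z" using P(1) by (simp add: nth_append)
      show "distinct (vs @ [z])" using P(4) False by simp
      show "distinct (es @ [g])" using P(5) gn by simp
      show "set (es @ [g]) \<subseteq> D" using P(6) g by simp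
      show "\<forall>i<length (es @ [g]). {src ((es @ [g]) ! i), tgt ((es @ [g]) ! i)} = {(vs @ [z]) ! i, (vs @ [z]) ! Suc i}"
      proof (intro allI impI)
        fix i assume "i < length (es @ [g])"
        then have "i < length es \<or> i = length es" by auto
        then show "{src ((es @ [g]) ! i), tgt ((es @ [g]) ! i)} = {(vs @ [z]) ! i, (vs @ [z]) ! Suc i}"
        proof
          assume "i < length es" then show ?thesis using P(1,7) by (simp add: nth_append)
        next
          assume "i = length es" then show ?thesis using P(1,3) g by (simp add: nth_append)
        qed
      qed
    qed
  qed
qed

lemma has_cycle_mono: "D \<subseteq> D' \<Longrightarrow> has_cycle src tgt D \<Longrightarrow> has_cycle src tgt D'"
  unfolding has_cycle_def by blast

lemma acyclic_noloop: "\<not> has_cycle src tgt D \<Longrightarrow> f \<in> D \<Longrightarrow> src f \<noteq> tgt f"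
  unfolding has_cycle_def
  by (rule notI, erule notE, rule exI[of _ "[f]"], rule exI[of _ "[src f]"]) auto

lemma cycle_from_path:
  assumes "f \<notin> D" "reach src tgt D (tgt f) (src f)"
  shows "has_cycle src tgt (insert f D)"
proof -
  obtain vs es where P: "length vs = length es + 1" "vs ! 0 = tgt f" "vs ! length es = src f" "distinct vs"
     "distinct es" "set es \<subseteq> D" "\<forall>i<length es. {src (es!i), tgt (es!i)} = {vs!i, vs!Suc i}"
    using simple_path[OF assms(2)] by blast
  show ?thesis unfolding has_cycle_def
  proof (rule exI[of _ "es @ [f]"], rule exI[of _ vs], intro conjI)
    show "es @ [f] \<noteq> []" by simp
    show "length vs = length (es @ [f])" using P(1) by simp
    show "distinct (es @ [f])" using P(5,6) assms(1) by auto
    show "distinct vs" by fact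
    show "set (es @ [f]) \<subseteq> insert f D" using P(6) by auto
    show "\<forall>i<length (es @ [f]). {src ((es @ [f]) ! i), tgt ((es @ [f]) ! i)} = {vs ! i, vs ! ((i + 1) mod length (es @ [f]))}"
    proof (intro allI impI)
      fix i assume "i < length (es @ [f])"
      then have "i < length es \<or> i = length es" by auto
      then show "{src ((es @ [f]) ! i), tgt ((es @ [f]) ! i)} = {vs ! i, vs ! ((i + 1) mod length (es @ [f]))}"
      proof
        assume "i < length es" then show ?thesis using P(7) by (simp add: nth_append)
      next
        assume "i = length es" then show ?thesis using P(2,3) by (auto simp: nth_append)
      qed
    qed
  qed
qed

lemma potential:
  fixes w :: "'e \<Rightarrow> real"
  assumes "finite D" "\<not> has_cycle src tgt D"
  shows "\<exists>P::'v \<Rightarrow> real. \<forall>f\<in>D. P (src f) - P (tgt f) = w f"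
  using assms
proof (induction D rule: finite_induct)
  case empty then show ?case by simp
next
  case (insert f D)
  have "\<not> has_cycle src tgt D" using insert(4) has_cycle_mono[of D "insert f D"] by blast
  with insert(3) obtain P' where P': "\<forall>g\<in>D. P' (src g) - P' (tgt g) = w g" by blast
  have nr: "\<not> reach src tgt D (tgt f) (src f)" using cycle_from_path[OF insert(2)] insert(4) by blast
  define \<delta> where "\<delta> = P' (src f) - P' (tgt f) - w f"
  define P where "P x = P' x + (if reach src tgt D (tgt f) x then \<delta> else 0)" for x
  have "\<forall>g\<in>insert f D. P (src g) - P (tgt g) = w g"
  proof
    fix g assume g: "g \<in> insert f D"
    show "P (src g) - P (tgt g) = w g"
    proof (cases "g = f")
      case True then show ?thesis using nr by (simp add: P_def \<delta>_def)
    next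
      case False
      then have gD: "g \<in> D" using g by simp
      have "reach src tgt D (tgt f) (src g) = reach src tgt D (tgt f) (tgt g)"
        using reach_edge[OF gD, of src tgt] reach_sym[OF reach_edge[OF gD, of src tgt]]
        by (meson rtranclp_trans)
      then show ?thesis using P' gD by (simp add: P_def)
    qed
  qed
  then show ?case by blast
qed



lemma sum_ind: "finite S \<Longrightarrow> q \<in> S \<Longrightarrow> (\<Sum>p\<in>S. (if p = q then 1 else 0) * F p) = (F q :: real)"
proof -
  assume "finite S" "q \<in> S"
  have "(\<Sum>p\<in>S. (if p = q then 1 else 0) * F p) = (\<Sum>p\<in>S. (if p = q then F p else 0))"
    by (rule sum.cong) auto
  then show ?thesis using \<open>finite S\<close> \<open>q \<in> S\<close> by simp
qed

lemma double_E: "f \<in> double_edges E src tgt S \<Longrightarrow> f \<in> E \<and> src f \<noteq> tgt f \<and> eE f \<in> S \<and>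
   (eLeft src tgt f \<in> S \<or> eRight src tgt f \<in> S)"
  unfolding double_edges_def left_edges_def right_edges_def selected_edges_def by auto

lemma walk_dep:
  assumes "finite S" "set es \<subseteq> double_edges E src tgt S" "length vs = length es + 1"
    "\<forall>i<length es. {src (es!i), tgt (es!i)} = {vs!i, vs!Suc i}"
  shows "\<exists>c. (\<Sum>p\<in>S. c p) = 0 \<and> (\<forall>j. (\<Sum>p\<in>S. c p * p j) = eV (vs!0) j - eV (vs!length es) j)
     \<and> (\<forall>u. c (eV u) = 0) \<and> (\<forall>f. f \<notin> set es \<longrightarrow> c (eE f) = 0)
     \<and> (distinct es \<and> es \<noteq> [] \<longrightarrow> c (eE (es!0)) \<noteq> 0)"
  using assms(2-4)
proof (induction es arbitrary: vs)
  case Nil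
  then obtain v where "vs = [v]" by (cases vs) auto
  then show ?case by (intro exI[of _ "\<lambda>_. 0"]) simp
next
  case (Cons g es)
  obtain v0 vs' where vs: "vs = v0 # vs'" using Cons(3) by (cases vs) auto
  have l: "length vs' = length es + 1" using Cons(3) vs by simp
  have ed: "\<forall>i<length es. {src (es!i), tgt (es!i)} = {vs'!i, vs'!Suc i}"
    using Cons(4) vs by (metis Suc_less_eq length_Cons nth_Cons_Suc)
  obtain c' where c': "(\<Sum>p\<in>S. c' p) = 0" "\<forall>j. (\<Sum>p\<in>S. c' p * p j) = eV (vs'!0) j - eV (vs'!length es) j"
     "\<forall>u. c' (eV u) = 0" "\<forall>f. f \<notin> set es \<longrightarrow> c' (eE f) = 0"
    using Cons(1)[OF _ l ed] Cons(2) by auto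
  have gd: "g \<in> double_edges E src tgt S" using Cons(2) by simp
  note gD = double_E[OF gd]
  have ge: "{src g, tgt g} = {v0, vs'!0}" using Cons(4) vs by force
  define q where "q = (if eLeft src tgt g \<in> S then eLeft src tgt g else eRight src tgt g)"
  have qS: "q \<in> S" using gD by (auto simp: q_def)
  define \<sigma> :: real where "\<sigma> = (if q = eLeft src tgt g then (if src g = v0 then 1 else -1)
       else (if tgt g = v0 then 1 else -1))"
  have qe: "\<sigma> * (q j - eE g j) = eV v0 j - eV (vs'!0) j" for j
  proof -
    have "src g = v0 \<and> tgt g = vs'!0 \<or> src g = vs'!0 \<and> tgt g = v0" using ge by (auto simp: doubleton_eq_iff)
    then show ?thesis using gD
      by (auto simp: \<sigma>_def q_def eLeft_app eRight_app)
  qed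
  have s1: "\<sigma> = 1 \<or> \<sigma> = -1" by (simp add: \<sigma>_def)
  have qne: "q \<noteq> eV u" "q \<noteq> eE f" for u f
    using gD eLeft_ne_eV[of src g tgt u] eLeft_ne_eE[of src g tgt f] eRight_ne_eV[of src g tgt u] eRight_ne_eE[of src g tgt f]
    by (auto simp: q_def)
  define c where "c p = c' p + \<sigma> * ((if p = q then 1 else 0) - (if p = eE g then 1 else 0))" for p
  have fin: "finite S" by fact
  show ?case
  proof (rule exI[of _ c], intro conjI allI impI)
    have "(\<Sum>p\<in>S. c p) = (\<Sum>p\<in>S. c' p) + \<sigma> * ((\<Sum>p\<in>S. (if p = q then 1 else 0) * 1) - (\<Sum>p\<in>S. (if p = eE g then 1 else 0) * 1))"
      unfolding c_def by (simp add: sum.distrib sum_distrib_left sum_subtractf right_diff_distrib)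
    also have "\<dots> = 0" using c'(1) sum_ind[OF fin qS, of "\<lambda>_. 1"] sum_ind[OF fin, of "eE g" "\<lambda>_. 1"] gD by simp
    finally show "(\<Sum>p\<in>S. c p) = 0" .
  next
    fix j
    have "(\<Sum>p\<in>S. c p * p j) = (\<Sum>p\<in>S. c' p * p j) + \<sigma> * ((\<Sum>p\<in>S. (if p = q then 1 else 0) * p j) - (\<Sum>p\<in>S. (if p = eE g then 1 else 0) * p j))"
      unfolding c_def by (simp add: algebra_simps sum.distrib sum_distrib_left sum_subtractf)
    also have "\<dots> = (\<Sum>p\<in>S. c' p * p j) + \<sigma> * (q j - eE g j)"
      using sum_ind[OF fin qS, of "\<lambda>p. p j"] sum_ind[OF fin, of "eE g" "\<lambda>p. p j"] gD by simp
    also have "\<dots> = eV (vs!0) j - eV (vs!length (g#es)) j" using c'(2) qe vs by simp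
    finally show "(\<Sum>p\<in>S. c p * p j) = eV (vs!0) j - eV (vs!length (g#es)) j" .
  next
    fix u show "c (eV u) = 0" using c'(3) qne(1)[of u] eV_ne_eE[of u g] by (auto simp: c_def)
  next
    fix f assume "f \<notin> set (g # es)"
    then show "c (eE f) = 0" using c'(4) qne(2)[of f] eE_inj[of f g] by (auto simp: c_def)
  next
    assume "distinct (g # es) \<and> g # es \<noteq> []"
    then have "g \<notin> set es" by simp
    then show "c (eE ((g # es) ! 0)) \<noteq> 0" using c'(4) qne s1 by (auto simp: c_def)
  qed
qed



locale cosmo =
  fixes V :: "'v set" and E :: "'e set" and src tgt :: "'e \<Rightarrow> 'v"
    and h :: "('v,'e) pt \<Rightarrow> real" and c0 :: "'v+'e \<Rightarrow> real" and d0 :: real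
  assumes finV: "finite V" and finE: "finite E"
    and ends: "\<And>f. f \<in> E \<Longrightarrow> src f \<in> V \<and> tgt f \<in> V"
    and std_le: "\<And>p. p \<in> cosmo_points V E src tgt \<Longrightarrow> Lk (Inl`V \<union> Inr`E) c0 p + d0 \<le> h p"
    and std_eq: "eV`V \<union> eE`E = {p \<in> cosmo_points V E src tgt. Lk (Inl`V \<union> Inr`E) c0 p + d0 = h p}"
    and indep: "\<And>S. S \<in> regular_subdivision V E (cosmo_points V E src tgt) h \<Longrightarrow> aff_indep S"
begin

abbreviation "A \<equiv> cosmo_points V E src tgt"
abbreviation "I \<equiv> Inl`V \<union> Inr`E"
abbreviation "T \<equiv> regular_subdivision V E A h"
abbreviation "til \<equiv> eTil src tgt"
abbreviation "lft \<equiv> eLeft src tgt"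
abbreviation "rgt \<equiv> eRight src tgt"

definition H where "H p = h p - Lk I c0 p - d0"
definition Kc where "Kc k \<longleftrightarrow> (\<forall>p\<in>A. Lk I k p \<le> H p)"
definition tight where "tight k = {p\<in>A. Lk I k p = H p}"

lemma finI: "finite I" using finV finE by simp

lemma finA: "finite A" unfolding cosmo_points_def using finV finE by auto

lemma A_cases:
  assumes "p \<in> A"
  obtains u where "u \<in> V" "p = eV u"
  | f where "f \<in> E" "p = eE f" | f where "f \<in> E" "p = til f"
  | f where "f \<in> E" "p = lft f" | f where "f \<in> E" "p = rgt f"
  using assms unfolding cosmo_points_def by blast

lemma inA: "u \<in> V \<Longrightarrow> eV u \<in> A" "f \<in> E \<Longrightarrow> eE f \<in> A" "f \<in> E \<Longrightarrow> til f \<in> A"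
  "f \<in> E \<Longrightarrow> lft f \<in> A" "f \<in> E \<Longrightarrow> rgt f \<in> A"
  unfolding cosmo_points_def by auto

lemma L_eV: "u \<in> V \<Longrightarrow> Lk I k (eV u) = k (Inl u)"
  unfolding eV_def using finI by (simp add: Lk_unit)
lemma L_eE: "f \<in> E \<Longrightarrow> Lk I k (eE f) = k (Inr f)"
  unfolding eE_def using finI by (simp add: Lk_unit)
lemma L_til: "f \<in> E \<Longrightarrow> Lk I k (til f) = k (Inl (src f)) + k (Inl (tgt f)) - k (Inr f)"
  unfolding eTil_def using ends[of f] by (simp add: Lk_add Lk_diff L_eV L_eE)
lemma L_lft: "f \<in> E \<Longrightarrow> Lk I k (lft f) = k (Inl (src f)) - k (Inl (tgt f)) + k (Inr f)"
  unfolding eLeft_def using ends[of f] by (simp add: Lk_add Lk_diff L_eV L_eE)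
lemma L_rgt: "f \<in> E \<Longrightarrow> Lk I k (rgt f) = - k (Inl (src f)) + k (Inl (tgt f)) + k (Inr f)"
  unfolding eRight_def using ends[of f] by (simp add: Lk_add Lk_diff Lk_neg L_eV L_eE)

lemma psum: "p \<in> A \<Longrightarrow> Lk I (\<lambda>_. 1) p = 1"
  by (erule A_cases) (simp_all add: L_eV L_eE L_til L_lft L_rgt)

lemma Lk_shift: "p \<in> A \<Longrightarrow> Lk I (\<lambda>i. c i + d) p = Lk I c p + d"
  using Lk_lin[of I c d "\<lambda>_. 1" p] psum[of p] by simp

lemma T_char: "T = {S. \<exists>k. Kc k \<and> S = tight k}"
proof (intro set_eqI iffI)
  fix S assume "S \<in> T"
  then obtain c d where cd: "\<forall>p\<in>A. Lk I c p + d \<le> h p" "S = {p\<in>A. Lk I c p + d = h p}"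
    unfolding regular_subdivision_def Lk_def by blast
  define k where "k i = c i + d - c0 i - d0" for i
  have e: "Lk I k p = Lk I c p + d - Lk I c0 p - d0" if "p \<in> A" for p
  proof -
    have kk: "k = (\<lambda>i. (\<lambda>i. c i + (d - d0)) i + (-1) * c0 i)" by (auto simp: k_def)
    have "Lk I k p = Lk I (\<lambda>i. c i + (d - d0)) p + (-1) * Lk I c0 p" unfolding kk by (rule Lk_lin)
    then show ?thesis using Lk_shift[OF that, of c "d - d0"] by simp
  qed
  have "Kc k" using cd(1) e by (auto simp: Kc_def H_def)
  moreover have "S = tight k" using cd(2) e by (auto simp: tight_def H_def)
  ultimately show "S \<in> {S. \<exists>k. Kc k \<and> S = tight k}" by blast
next
  fix S assume "S \<in> {S. \<exists>k. Kc k \<and> S = tight k}"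
  then obtain k where k: "Kc k" "S = tight k" by blast
  define c where "c i = k i + d0 + 1 * c0 i" for i
  have e: "Lk I c p + 0 = Lk I k p + Lk I c0 p + d0" if "p \<in> A" for p
  proof -
    have "Lk I c p = Lk I (\<lambda>i. k i + d0) p + 1 * Lk I c0 p" unfolding c_def by (rule Lk_lin)
    then show ?thesis using Lk_shift[OF that] by simp
  qed
  show "S \<in> T" unfolding regular_subdivision_def
    apply (rule CollectI, rule exI[of _ c], rule exI[of _ 0])
    using k e by (auto simp: Kc_def tight_def H_def Lk_def)
qed

lemma std_nonneg: "q \<in> eV`V \<union> eE`E \<Longrightarrow> q j \<ge> 0"
  by (auto simp: eV_app eE_app)

lemma H_nonneg: "p \<in> A \<Longrightarrow> H p \<ge> 0"
  using std_le[of p] by (simp add: H_def)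

lemma H_std: "u \<in> V \<Longrightarrow> H (eV u) = 0" "f \<in> E \<Longrightarrow> H (eE f) = 0"
proof -
  assume "u \<in> V" then have "eV u \<in> eV`V \<union> eE`E" by simp
  then show "H (eV u) = 0" using std_eq by (auto simp: H_def)
next
  assume "f \<in> E" then have "eE f \<in> eV`V \<union> eE`E" by simp
  then show "H (eE f) = 0" using std_eq by (auto simp: H_def)
qed

lemma H_pos: "p \<in> A \<Longrightarrow> p \<notin> eV`V \<union> eE`E \<Longrightarrow> H p > 0"
  using std_le[of p] std_eq by (force simp: H_def)

lemma H_til: "f \<in> E \<Longrightarrow> H (til f) > 0"
  apply (rule H_pos, simp add: inA)
  using std_nonneg[of "til f" "Inr f"] eTil_neg[of src tgt f] by auto

lemma H_lft: "f \<in> E \<Longrightarrow> src f \<noteq> tgt f \<Longrightarrow> H (lft f) > 0"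
  apply (rule H_pos, simp add: inA)
  using std_nonneg[of "lft f" "Inl (tgt f)"] eLeft_neg[of src f tgt] by auto

lemma H_rgt: "f \<in> E \<Longrightarrow> src f \<noteq> tgt f \<Longrightarrow> H (rgt f) > 0"
  apply (rule H_pos, simp add: inA)
  using std_nonneg[of "rgt f" "Inl (src f)"] eRight_neg[of src f tgt] by auto

lemma H_lft0: "f \<in> E \<Longrightarrow> H (lft f) \<ge> 0" "f \<in> E \<Longrightarrow> H (rgt f) \<ge> 0"
  by (simp_all add: H_nonneg inA)

lemma Kc_D:
  assumes "Kc k"
  shows "u \<in> V \<Longrightarrow> k (Inl u) \<le> 0"
    and "f \<in> E \<Longrightarrow> k (Inr f) \<le> 0"
    and "f \<in> E \<Longrightarrow> k (Inl (src f)) + k (Inl (tgt f)) - k (Inr f) \<le> H (til f)"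
    and "f \<in> E \<Longrightarrow> k (Inl (src f)) - k (Inl (tgt f)) + k (Inr f) \<le> H (lft f)"
    and "f \<in> E \<Longrightarrow> - k (Inl (src f)) + k (Inl (tgt f)) + k (Inr f) \<le> H (rgt f)"
proof -
  have le: "Lk I k p \<le> H p" if "p \<in> A" for p using assms that by (simp add: Kc_def)
  show "u \<in> V \<Longrightarrow> k (Inl u) \<le> 0" using le[OF inA(1)] by (simp add: L_eV H_std)
  show "f \<in> E \<Longrightarrow> k (Inr f) \<le> 0" using le[OF inA(2)] by (simp add: L_eE H_std)
  show "f \<in> E \<Longrightarrow> k (Inl (src f)) + k (Inl (tgt f)) - k (Inr f) \<le> H (til f)"
    using le[OF inA(3)] by (simp add: L_til)
  show "f \<in> E \<Longrightarrow> k (Inl (src f)) - k (Inl (tgt f)) + k (Inr f) \<le> H (lft f)"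
    using le[OF inA(4)] by (simp add: L_lft)
  show "f \<in> E \<Longrightarrow> - k (Inl (src f)) + k (Inl (tgt f)) + k (Inr f) \<le> H (rgt f)"
    using le[OF inA(5)] by (simp add: L_rgt)
qed

lemma Kc_I:
  assumes "\<And>u. u \<in> V \<Longrightarrow> k (Inl u) \<le> 0"
    and "\<And>f. f \<in> E \<Longrightarrow> k (Inr f) \<le> 0"
    and "\<And>f. f \<in> E \<Longrightarrow> k (Inl (src f)) + k (Inl (tgt f)) - k (Inr f) \<le> H (til f)"
    and "\<And>f. f \<in> E \<Longrightarrow> k (Inl (src f)) - k (Inl (tgt f)) + k (Inr f) \<le> H (lft f)"
    and "\<And>f. f \<in> E \<Longrightarrow> - k (Inl (src f)) + k (Inl (tgt f)) + k (Inr f) \<le> H (rgt f)"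
  shows "Kc k"
  unfolding Kc_def
proof
  fix p assume "p \<in> A"
  then show "Lk I k p \<le> H p"
    by (cases rule: A_cases) (use assms in \<open>simp_all add: L_eV L_eE L_til L_lft L_rgt H_std\<close>)
qed

lemma tight_iff:
  shows "u \<in> V \<Longrightarrow> eV u \<in> tight k \<longleftrightarrow> k (Inl u) = 0"
    and "f \<in> E \<Longrightarrow> eE f \<in> tight k \<longleftrightarrow> k (Inr f) = 0"
    and "f \<in> E \<Longrightarrow> til f \<in> tight k \<longleftrightarrow> k (Inl (src f)) + k (Inl (tgt f)) - k (Inr f) = H (til f)"
    and "f \<in> E \<Longrightarrow> lft f \<in> tight k \<longleftrightarrow> k (Inl (src f)) - k (Inl (tgt f)) + k (Inr f) = H (lft f)"
    and "f \<in> E \<Longrightarrow> rgt f \<in> tight k \<longleftrightarrow> - k (Inl (src f)) + k (Inl (tgt f)) + k (Inr f) = H (rgt f)"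
  by (simp_all add: tight_def inA L_eV L_eE L_til L_lft L_rgt H_std)

lemma incompat:
  assumes "Kc k" "f \<in> E"
  shows "\<not> (eE f \<in> tight k \<and> til f \<in> tight k)"
    and "\<not> (til f \<in> tight k \<and> lft f \<in> tight k)"
    and "\<not> (til f \<in> tight k \<and> rgt f \<in> tight k)"
    and "src f \<noteq> tgt f \<Longrightarrow> \<not> (lft f \<in> tight k \<and> rgt f \<in> tight k)"
proof -
  note KD = Kc_D[OF assms(1)]
  have s: "k (Inl (src f)) \<le> 0" "k (Inl (tgt f)) \<le> 0" using KD(1) ends[OF assms(2)] by auto
  note ti = tight_iff(2-5)[OF assms(2), of k]
  show "\<not> (eE f \<in> tight k \<and> til f \<in> tight k)" using s ti H_til[OF assms(2)] by auto
  show "\<not> (til f \<in> tight k \<and> lft f \<in> tight k)" using s ti H_til[OF assms(2)] H_lft0[OF assms(2)] by auto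
  show "\<not> (til f \<in> tight k \<and> rgt f \<in> tight k)" using s ti H_til[OF assms(2)] H_lft0[OF assms(2)] by auto
  show "src f \<noteq> tgt f \<Longrightarrow> \<not> (lft f \<in> tight k \<and> rgt f \<in> tight k)"
    using KD(2)[OF assms(2)] ti H_lft[OF assms(2)] H_rgt[OF assms(2)] by auto
qed

lemma min_det:
  assumes "Kc k" "f \<in> E" "eE f \<in> tight k \<or> lft f \<in> tight k \<or> rgt f \<in> tight k"
  shows "k (Inr f) = min 0 (min (H (lft f) - (k (Inl (src f)) - k (Inl (tgt f))))
                                 (H (rgt f) + (k (Inl (src f)) - k (Inl (tgt f)))))"
  using Kc_D(2,4,5)[OF assms(1,2)] assms(3) tight_iff(2,4,5)[OF assms(2), of k]
  by (auto simp: min_def)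

lemma tight_eq:
  assumes "\<And>u. u \<in> V \<Longrightarrow> k (Inl u) = k' (Inl u)" "\<And>f. f \<in> E \<Longrightarrow> k (Inr f) = k' (Inr f)"
  shows "tight k = tight k'"
proof -
  have "Lk I k p = Lk I k' p" for p by (rule Lk_cong) (use assms in auto)
  then show ?thesis by (simp add: tight_def)
qed

end

context cosmo begin

lemma perturb_pos:
  assumes K: "Kc k" and z0: "\<forall>p\<in>tight k. Lk I z p = 0" and p0: "p0 \<in> A" "Lk I z p0 > 0"
  shows "\<exists>S'\<in>T. tight k \<subset> S'"
proof -
  define Pos where "Pos = {p\<in>A. Lk I z p > 0}"
  define r where "r p = (H p - Lk I k p) / Lk I z p" for p
  have finP: "finite Pos" using finA by (simp add: Pos_def)
  have neP: "Pos \<noteq> {}" using p0 by (auto simp: Pos_def)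
  define \<epsilon> where "\<epsilon> = Min (r ` Pos)"
  have gap: "H p - Lk I k p > 0" if "p \<in> Pos" for p
  proof -
    have "p \<notin> tight k" using that z0 by (auto simp: Pos_def)
    moreover have "Lk I k p \<le> H p" using K that by (auto simp: Kc_def Pos_def)
    ultimately show ?thesis using that by (auto simp: tight_def Pos_def)
  qed
  have rpos: "r p > 0" if "p \<in> Pos" for p using gap[OF that] that by (auto simp: r_def Pos_def)
  have epos: "\<epsilon> > 0" unfolding \<epsilon>_def using finP neP rpos by (auto simp: Min_gr_iff)
  have ele: "\<epsilon> \<le> r p" if "p \<in> Pos" for p unfolding \<epsilon>_def using finP that by simp
  have "\<epsilon> \<in> r ` Pos" unfolding \<epsilon>_def using finP neP by (intro Min_in) auto
  then obtain ps where ps: "ps \<in> Pos" "\<epsilon> = r ps" by auto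
  define k' where "k' i = k i + \<epsilon> * z i" for i
  have Lk': "Lk I k' p = Lk I k p + \<epsilon> * Lk I z p" for p unfolding k'_def by (rule Lk_lin)
  have K': "Kc k'" unfolding Kc_def
  proof
    fix p assume pA: "p \<in> A"
    show "Lk I k' p \<le> H p"
    proof (cases "Lk I z p > 0")
      case True
      then have "p \<in> Pos" using pA by (simp add: Pos_def)
      then have "\<epsilon> \<le> (H p - Lk I k p) / Lk I z p" using ele by (simp add: r_def)
      then have "\<epsilon> * Lk I z p \<le> H p - Lk I k p" using True by (simp add: pos_le_divide_eq)
      then show ?thesis by (simp add: Lk')
    next
      case False
      then have "\<epsilon> * Lk I z p \<le> 0" using epos by (simp add: mult_nonneg_nonpos)
      moreover have "Lk I k p \<le> H p" using K pA by (simp add: Kc_def)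
      ultimately show ?thesis by (simp add: Lk')
    qed
  qed
  have sub: "tight k \<subseteq> tight k'" using z0 by (auto simp: tight_def Lk')
  have "ps \<in> tight k'" using ps gap[OF ps(1)] by (auto simp: tight_def Lk' r_def Pos_def)
  moreover have "ps \<notin> tight k" using ps(1) z0 by (auto simp: Pos_def)
  ultimately have "tight k \<subset> tight k'" using sub by blast
  moreover have "tight k' \<in> T" using K' by (auto simp: T_char)
  ultimately show ?thesis by blast
qed

lemma max_kernel:
  assumes M: "maximal_cell T (tight k)" and K: "Kc k" and z0: "\<forall>p\<in>tight k. Lk I z p = 0" and p0: "p0 \<in> A"
  shows "Lk I z p0 = 0"
proof (rule ccontr)
  assume ne: "Lk I z p0 \<noteq> 0"
  have nm: "\<not> (\<exists>S'\<in>T. tight k \<subset> S')" using M by (simp add: maximal_cell_def)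
  show False
  proof (cases "Lk I z p0 > 0")
    case True then show False using perturb_pos[OF K z0 p0] nm by blast
  next
    case False
    then have "Lk I (\<lambda>i. - z i) p0 > 0" using ne by (simp add: Lk_negk)
    moreover have "\<forall>p\<in>tight k. Lk I (\<lambda>i. - z i) p = 0" using z0 by (simp add: Lk_negk)
    ultimately show False using perturb_pos[OF K _ p0] nm by blast
  qed
qed

lemma maxD: "maximal_cell T S \<Longrightarrow> \<exists>k. Kc k \<and> S = tight k"
  unfolding maximal_cell_def by (auto simp: T_char)

lemma edge_tight:
  assumes M: "maximal_cell T (tight k)" and K: "Kc k" and f: "f \<in> E"
  shows "eE f \<in> tight k \<or> til f \<in> tight k \<or> lft f \<in> tight k \<or> rgt f \<in> tight k"
proof (rule ccontr)
  assume nt: "\<not> ?thesis"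
  define z :: "'v + 'e \<Rightarrow> real" where "z i = (if i = Inr f then 1 else (0::real))" for i
  have Lz: "Lk I z p = p (Inr f)" for p
  proof -
    have "Lk I z p = (\<Sum>i\<in>I. if i = Inr f then p i else 0)" unfolding Lk_def z_def by (rule sum.cong) auto
    also have "\<dots> = p (Inr f)" using finI f by simp
    finally show ?thesis .
  qed
  have "\<forall>p\<in>tight k. Lk I z p = 0"
  proof
    fix p assume pt: "p \<in> tight k"
    then have "p \<in> A" by (simp add: tight_def)
    then show "Lk I z p = 0"
    proof (cases rule: A_cases)
      case (1 u) then show ?thesis by (simp add: Lz eV_app)
    next
      case (2 g) then show ?thesis using nt pt by (auto simp: Lz eE_app)
    next
      case (3 g) then show ?thesis using nt pt by (auto simp: Lz eTil_app eV_app eE_app)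
    next
      case (4 g) then show ?thesis using nt pt by (auto simp: Lz eLeft_app eV_app eE_app)
    next
      case (5 g) then show ?thesis using nt pt by (auto simp: Lz eRight_app eV_app eE_app)
    qed
  qed
  from max_kernel[OF M K this inA(2)[OF f]] show False by (simp add: Lz eE_app)
qed

abbreviation "DS S \<equiv> double_edges E src tgt S"

lemma root_exists:
  assumes M: "maximal_cell T (tight k)" and K: "Kc k" and w: "w \<in> V"
  shows "\<exists>u. reach src tgt (DS (tight k)) w u \<and> eV u \<in> tight k"
proof (rule ccontr)
  assume nr: "\<not> ?thesis"
  let ?S = "tight k"
  define zV where "zV u = (if reach src tgt (DS ?S) w u then 1 else (0::real))" for u
  define zE where "zE f = (if til f \<in> ?S then zV (src f) + zV (tgt f) else if eE f \<in> ?S then 0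
      else if lft f \<in> ?S then zV (tgt f) - zV (src f) else zV (src f) - zV (tgt f))" for f
  define z where "z i = (case i of Inl u \<Rightarrow> zV u | Inr f \<Rightarrow> zE f)" for i
  have same: "zV (src f) = zV (tgt f)" if "f \<in> DS ?S" for f
  proof -
    have "reach src tgt (DS ?S) (src f) (tgt f)" "reach src tgt (DS ?S) (tgt f) (src f)"
      using reach_edge[OF that] reach_sym[OF reach_edge[OF that]] by auto
    then show ?thesis unfolding zV_def by (meson rtranclp_trans)
  qed
  have inDS: "f \<in> DS ?S" if "f \<in> E" "src f \<noteq> tgt f" "eE f \<in> ?S" "lft f \<in> ?S \<or> rgt f \<in> ?S" for f
    using that unfolding double_edges_def left_edges_def right_edges_def selected_edges_def by auto
  have "\<forall>p\<in>?S. Lk I z p = 0"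
  proof
    fix p assume pt: "p \<in> ?S"
    then have "p \<in> A" by (simp add: tight_def)
    then show "Lk I z p = 0"
    proof (cases rule: A_cases)
      case (1 u) then show ?thesis using nr pt by (auto simp: L_eV z_def zV_def)
    next
      case (2 f) then show ?thesis using pt incompat(1)[OF K 2(1)] by (auto simp: L_eE z_def zE_def)
    next
      case (3 f) then show ?thesis using pt by (auto simp: L_til z_def zE_def)
    next
      case (4 f)
      have nt: "til f \<notin> ?S" using incompat(2)[OF K 4(1)] pt 4 by auto
      show ?thesis
      proof (cases "eE f \<in> ?S")
        case True
        then have "zV (src f) = zV (tgt f)"
          using same inDS[OF 4(1) _ True] pt 4 by (cases "src f = tgt f") auto
        then show ?thesis using 4 nt True by (simp add: L_lft z_def zE_def)
      next
        case False then show ?thesis using 4 nt pt by (simp add: L_lft z_def zE_def)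
      qed
    next
      case (5 f)
      have nt: "til f \<notin> ?S" using incompat(3)[OF K 5(1)] pt 5 by auto
      show ?thesis
      proof (cases "eE f \<in> ?S")
        case True
        then have "zV (src f) = zV (tgt f)"
          using same inDS[OF 5(1) _ True] pt 5 by (cases "src f = tgt f") auto
        then show ?thesis using 5 nt True by (simp add: L_rgt z_def zE_def)
      next
        case False
        have nl: "lft f \<notin> ?S"
        proof (cases "src f = tgt f")
          case True then show ?thesis using False eLeft_loop[of src f tgt, OF True] by simp
        next
          case ne: False then show ?thesis using incompat(4)[OF K 5(1) ne] pt 5 by auto
        qed
        then show ?thesis using 5 nt False by (simp add: L_rgt z_def zE_def)
      qed
    qed
  qed
  from max_kernel[OF M K this inA(1)[OF w]] show False by (simp add: L_eV[OF w] z_def zV_def)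
qed

lemma acyc:
  assumes S: "S \<in> T"
  shows "\<not> has_cycle src tgt (DS S)"
proof
  assume "has_cycle src tgt (DS S)"
  then obtain es vs where C: "es \<noteq> []" "length vs = length es" "distinct es" "set es \<subseteq> DS S"
    "\<forall>i < length es. {src (es ! i), tgt (es ! i)} = {vs ! i, vs ! ((i + 1) mod length es)}"
    unfolding has_cycle_def by blast
  have ai: "aff_indep S" using indep S by simp
  then have fin: "finite S" by (simp add: aff_indep_def)
  define vs2 where "vs2 = vs @ [vs ! 0]"
  have l2: "length vs2 = length es + 1" using C by (simp add: vs2_def)
  have e2: "\<forall>i<length es. {src (es!i), tgt (es!i)} = {vs2!i, vs2!Suc i}"
  proof (intro allI impI)
    fix i assume i: "i < length es"
    show "{src (es!i), tgt (es!i)} = {vs2!i, vs2!Suc i}"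
    proof (cases "Suc i < length es")
      case True then show ?thesis using C(2,5) i by (simp add: vs2_def nth_append)
    next
      case False then have "Suc i = length es" using i by simp
      then show ?thesis using C(2,5) i by (simp add: vs2_def nth_append)
    qed
  qed
  obtain c where c: "(\<Sum>p\<in>S. c p) = 0" "\<forall>j. (\<Sum>p\<in>S. c p * p j) = eV (vs2!0) j - eV (vs2!length es) j"
    "c (eE (es!0)) \<noteq> 0"
    using walk_dep[OF fin C(4) l2 e2] C(1,3) by blast
  have "vs2 ! length es = vs2 ! 0" using C(1,2) by (simp add: vs2_def nth_append)
  then have "\<forall>j. (\<Sum>p\<in>S. c p * p j) = 0" using c(2) by simp
  moreover have "eE (es!0) \<in> S" using C(1,4) double_E[of "es!0" E src tgt S] by (metis length_greater_0_conv nth_mem subsetD)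
  ultimately show False using ai c(1,3) unfolding aff_indep_def by blast
qed

end

context cosmo begin

lemma DS_E: "DS S \<subseteq> E" unfolding double_edges_def selected_edges_def by auto

lemma unique:
  assumes M1: "maximal_cell T S1" and M2: "maximal_cell T S2"
    and sq: "squiggly E src tgt S1 = squiggly E src tgt S2"
    and d1: "DS S1 = D" and d2: "DS S2 = D"
    and q: "\<forall>f\<in>D. p f \<in> {lft f, rgt f} \<and> p f \<in> S1 \<and> p f \<in> S2"
  shows "S1 = S2"
proof -
  obtain k1 where k1: "Kc k1" "S1 = tight k1" using maxD[OF M1] by blast
  obtain k2 where k2: "Kc k2" "S2 = tight k2" using maxD[OF M2] by blast
  have DE: "D \<subseteq> E" using DS_E d1 by blast
  have DV: "\<forall>f\<in>D. src f \<in> V \<and> tgt f \<in> V" using DE ends by blast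
  define g where "g u = k1 (Inl u) - k2 (Inl u)" for u
  have gc: "\<forall>f\<in>D. g (src f) = g (tgt f)"
  proof
    fix f assume fD: "f \<in> D"
    have fE: "f \<in> E" using fD DE by blast
    have e1: "eE f \<in> S1" "eE f \<in> S2" using double_E[of f E src tgt S1] double_E[of f E src tgt S2] fD d1 d2 by auto
    show "g (src f) = g (tgt f)"
    proof (cases "p f = lft f")
      case True
      then have "lft f \<in> S1" "lft f \<in> S2" using q fD by auto
      then show ?thesis using e1 tight_iff(2,4)[OF fE] k1 k2 by (auto simp: g_def)
    next
      case False
      then have "rgt f \<in> S1" "rgt f \<in> S2" using q fD by auto
      then show ?thesis using e1 tight_iff(2,5)[OF fE] k1 k2 by (auto simp: g_def)
    qed
  qed
  have geq: "k1 (Inl w) = k2 (Inl w)" if w: "w \<in> V" for w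
  proof -
    obtain u where u: "reach src tgt D w u" "eV u \<in> S1" using root_exists[of k1 w] M1 k1 w d1 by auto
    have uV: "u \<in> V" using reach_V[OF DV u(1) w] .
    have "g u \<ge> 0" using u(2) k1 tight_iff(1)[OF uV] Kc_D(1)[OF k2(1) uV] by (auto simp: g_def)
    then have a: "g w \<ge> 0" using reach_const[OF gc u(1)] by simp
    obtain u' where u': "reach src tgt D w u'" "eV u' \<in> S2" using root_exists[of k2 w] M2 k2 w d2 by auto
    have uV': "u' \<in> V" using reach_V[OF DV u'(1) w] .
    have "g u' \<le> 0" using u'(2) k2 tight_iff(1)[OF uV'] Kc_D(1)[OF k1(1) uV'] by (auto simp: g_def)
    then have "g w \<le> 0" using reach_const[OF gc u'(1)] by simp
    with a show ?thesis by (simp add: g_def)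
  qed
  have feq: "k1 (Inr f) = k2 (Inr f)" if f: "f \<in> E" for f
  proof (cases "til f \<in> S1")
    case True
    then have "til f \<in> S2" using sq f unfolding squiggly_def by blast
    then show ?thesis using True tight_iff(3)[OF f] k1 k2 geq ends[OF f] by auto
  next
    case False
    then have n2: "til f \<notin> S2" using sq f unfolding squiggly_def by blast
    have "eE f \<in> tight k1 \<or> lft f \<in> tight k1 \<or> rgt f \<in> tight k1" using edge_tight[of k1 f] M1 k1 f False by auto
    note m1 = min_det[OF k1(1) f this]
    have "eE f \<in> tight k2 \<or> lft f \<in> tight k2 \<or> rgt f \<in> tight k2" using edge_tight[of k2 f] M2 k2 f n2 by auto
    note m2 = min_det[OF k2(1) f this]
    show ?thesis using m1 m2 geq ends[OF f] by simp
  qed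
  show ?thesis using tight_eq[of k1 k2] geq feq k1 k2 by simp
qed

end

context cosmo begin

lemma exist:
  assumes E1: "E1 \<subseteq> E" and DE: "D \<subseteq> E" and dis: "E1 \<inter> D = {}" and ac: "\<not> has_cycle src tgt D"
    and pD: "\<forall>f\<in>D. p f \<in> {lft f, rgt f}"
  shows "\<exists>S. maximal_cell T S \<and> squiggly E src tgt S = E1 \<and> DS S = D \<and> (\<forall>f\<in>D. p f \<in> S)"
proof -
  define wD where "wD f = (if p f = lft f then H (lft f) else - H (rgt f))" for f
  have finD: "finite D" using finE DE finite_subset by blast
  obtain P :: "'v \<Rightarrow> real" where P: "\<forall>f\<in>D. P (src f) - P (tgt f) = wD f"
    using potential[OF finD ac, of wD] by blast
  let ?R = "reach src tgt D"
  have DV: "\<forall>f\<in>D. src f \<in> V \<and> tgt f \<in> V" using DE ends by blast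
  define Mx where "Mx x = Max (P ` {z\<in>V. ?R x z})" for x
  define \<alpha> where "\<alpha> x = P x - Mx x" for x
  have Mx_eq: "Mx x = Mx y" if "?R x y" for x y
  proof -
    have "{z\<in>V. ?R x z} = {z\<in>V. ?R y z}"
      using that reach_sym[OF that] by (auto intro: rtranclp_trans)
    then show ?thesis by (simp add: Mx_def)
  qed
  have finS: "finite {z\<in>V. ?R x z}" for x using finV by simp
  have \<alpha>_le: "\<alpha> x \<le> 0" if "x \<in> V" for x
  proof -
    have "P x \<in> P ` {z\<in>V. ?R x z}" using that by auto
    then have "P x \<le> Mx x" unfolding Mx_def using finS by simp
    then show ?thesis by (simp add: \<alpha>_def)
  qed
  have root: "\<exists>u\<in>V. ?R x u \<and> \<alpha> u = 0" if "x \<in> V" for x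
  proof -
    have "Mx x \<in> P ` {z\<in>V. ?R x z}" unfolding Mx_def using finS that by (intro Max_in) auto
    then obtain u where u: "u \<in> V" "?R x u" "P u = Mx x" by auto
    then show ?thesis using Mx_eq[OF u(2)] by (auto simp: \<alpha>_def)
  qed
  have Dedge: "\<alpha> (src f) - \<alpha> (tgt f) = wD f" if "f \<in> D" for f
    using P that Mx_eq[OF reach_edge[OF that]] by (simp add: \<alpha>_def)
  define \<beta> where "\<beta> f = (if f \<in> E1 then \<alpha> (src f) + \<alpha> (tgt f) - H (til f)
     else min 0 (min (H (lft f) - (\<alpha> (src f) - \<alpha> (tgt f))) (H (rgt f) + (\<alpha> (src f) - \<alpha> (tgt f)))))" for f
  define k where "k i = (case i of Inl u \<Rightarrow> \<alpha> u | Inr f \<Rightarrow> \<beta> f)" for i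
  have kk[simp]: "k (Inl u) = \<alpha> u" "k (Inr f) = \<beta> f" for u f by (simp_all add: k_def)
  have ef: "\<alpha> (src f) \<le> 0" "\<alpha> (tgt f) \<le> 0" "H (til f) > 0" "H (lft f) \<ge> 0" "H (rgt f) \<ge> 0" if "f \<in> E" for f
    using \<alpha>_le ends[OF that] H_til[OF that] H_lft0[OF that] by auto
  have K: "Kc k"
  proof (rule Kc_I)
    fix u assume "u \<in> V" then show "k (Inl u) \<le> 0" using \<alpha>_le by simp
  next
    fix f assume f: "f \<in> E" note e = ef[OF f]
    have b: "\<beta> f \<le> 0 \<and> \<beta> f \<le> H (lft f) - (\<alpha> (src f) - \<alpha> (tgt f)) \<and> \<beta> f \<le> H (rgt f) + (\<alpha> (src f) - \<alpha> (tgt f))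
       \<and> \<beta> f \<ge> \<alpha> (src f) + \<alpha> (tgt f) - H (til f)"
    proof (cases "f \<in> E1")
      case True then show ?thesis using e by (simp add: \<beta>_def)
    next
      case False
      then have "\<beta> f = min 0 (min (H (lft f) - (\<alpha> (src f) - \<alpha> (tgt f))) (H (rgt f) + (\<alpha> (src f) - \<alpha> (tgt f))))"
        by (simp add: \<beta>_def)
      then show ?thesis using e by (simp add: min.bounded_iff min_le_iff_disj)
    qed
    show "k (Inr f) \<le> 0" using b by simp
    show "k (Inl (src f)) + k (Inl (tgt f)) - k (Inr f) \<le> H (til f)" using b by simp
    show "k (Inl (src f)) - k (Inl (tgt f)) + k (Inr f) \<le> H (lft f)" using b by simp
    show "- k (Inl (src f)) + k (Inl (tgt f)) + k (Inr f) \<le> H (rgt f)" using b by simp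
  qed
  define S0 where "S0 = tight k"
  have S0T: "S0 \<in> T" using K by (auto simp: T_char S0_def)
  have sq: "squiggly E src tgt S0 = E1"
  proof -
    have "til f \<in> S0 \<longleftrightarrow> f \<in> E1" if f: "f \<in> E" for f
    proof -
      note e = ef[OF f]
      have "f \<notin> E1 \<Longrightarrow> \<alpha> (src f) + \<alpha> (tgt f) - \<beta> f < H (til f)" using e by (simp add: \<beta>_def)
      then show ?thesis using tight_iff(3)[OF f, of k] by (auto simp: S0_def \<beta>_def)
    qed
    then show ?thesis using E1 unfolding squiggly_def by auto
  qed
  have Dt: "eE f \<in> S0 \<and> p f \<in> S0" if fD: "f \<in> D" for f
  proof -
    have f: "f \<in> E" and nE1: "f \<notin> E1" using fD DE dis by auto
    note e = ef[OF f]
    have de: "\<alpha> (src f) - \<alpha> (tgt f) = wD f" using Dedge[OF fD] .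
    show ?thesis
    proof (cases "p f = lft f")
      case True
      have "\<beta> f = min 0 (min 0 (H (rgt f) + H (lft f)))" using nE1 de True by (simp add: \<beta>_def wD_def)
      then have "\<beta> f = 0" using e by (simp add: min_def)
      then show ?thesis using True de tight_iff(2,4)[OF f, of k] by (simp add: S0_def wD_def)
    next
      case False
      then have pr: "p f = rgt f" using pD fD by auto
      have "\<beta> f = min 0 (min (H (lft f) + H (rgt f)) 0)" using nE1 de False by (simp add: \<beta>_def wD_def)
      then have "\<beta> f = 0" using e by (simp add: min_def)
      then show ?thesis using False pr de tight_iff(2,5)[OF f, of k] by (simp add: S0_def wD_def)
    qed
  qed
  have DinDS: "D \<subseteq> DS S0"
  proof
    fix f assume fD: "f \<in> D"
    have "src f \<noteq> tgt f" using acyclic_noloop[OF ac fD] .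
    then show "f \<in> DS S0" using Dt[OF fD] pD fD DE
      unfolding double_edges_def left_edges_def right_edges_def selected_edges_def by auto
  qed
  have ai: "aff_indep S0" using indep S0T by simp
  have finS0: "finite S0" using ai by (simp add: aff_indep_def)
  have DSsub: "DS S0 \<subseteq> D"
  proof
    fix f assume fd: "f \<in> DS S0"
    show "f \<in> D"
    proof (rule ccontr)
      assume nD: "f \<notin> D"
      note fi = double_E[OF fd]
      have fE: "f \<in> E" using fi by simp
      obtain r1 where r1: "r1 \<in> V" "?R (src f) r1" "\<alpha> r1 = 0" using root ends[OF fE] by blast
      obtain r2 where r2: "r2 \<in> V" "?R (tgt f) r2" "\<alpha> r2 = 0" using root ends[OF fE] by blast
      have t1: "eV r1 \<in> S0" "eV r2 \<in> S0" using r1 r2 tight_iff(1) by (auto simp: S0_def)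
      show False
      proof (cases "r1 = r2")
        case True
        have "?R (tgt f) r1" using r2(2) True by simp
        then have "?R (tgt f) (src f)" using rtranclp_trans[OF _ reach_sym[OF r1(2)]] by blast
        then have "has_cycle src tgt (insert f D)" using cycle_from_path[OF nD] by blast
        then have "has_cycle src tgt (DS S0)" using has_cycle_mono[of "insert f D" "DS S0"] DinDS fd by blast
        then show False using acyc[OF S0T] by blast
      next
        case False
        let ?R' = "reach src tgt (DS S0)"
        have a: "?R' r1 (src f)" using reach_mono[OF DinDS reach_sym[OF r1(2)]] .
        have b: "?R' (src f) (tgt f)" using reach_edge[OF fd] .
        have c: "?R' (tgt f) r2" using reach_mono[OF DinDS r2(2)] .
        have "?R' r1 r2" using rtranclp_trans[OF rtranclp_trans[OF a b] c] .
        from simple_path[OF this] obtain vs es where W: "length vs = length es + 1" "vs ! 0 = r1" "vs ! length es = r2"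
          "set es \<subseteq> DS S0" "\<forall>i<length es. {src (es!i), tgt (es!i)} = {vs!i, vs!Suc i}"
          by blast
        obtain c where c: "(\<Sum>p\<in>S0. c p) = 0" "\<forall>j. (\<Sum>p\<in>S0. c p * p j) = eV (vs!0) j - eV (vs!length es) j"
          "\<forall>u. c (eV u) = 0"
          using walk_dep[OF finS0 W(4) W(1) W(5)] by blast
        define c2 where "c2 p = c p + 1 * ((if p = eV r2 then 1 else 0) - (if p = eV r1 then 1 else 0))" for p
        have "(\<Sum>p\<in>S0. c2 p) = (\<Sum>p\<in>S0. c p) + 1 * ((\<Sum>p\<in>S0. (if p = eV r2 then 1 else 0) * 1) - (\<Sum>p\<in>S0. (if p = eV r1 then 1 else 0) * 1))"
          unfolding c2_def by (simp add: sum.distrib sum_distrib_left sum_subtractf right_diff_distrib)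
        also have "\<dots> = 0" using c(1) sum_ind[OF finS0 t1(1), of "\<lambda>_. 1"] sum_ind[OF finS0 t1(2), of "\<lambda>_. 1"] by simp
        finally have s1: "(\<Sum>p\<in>S0. c2 p) = 0" .
        have s2: "(\<Sum>p\<in>S0. c2 p * p j) = 0" for j
        proof -
          have "(\<Sum>p\<in>S0. c2 p * p j) = (\<Sum>p\<in>S0. c p * p j) + 1 * ((\<Sum>p\<in>S0. (if p = eV r2 then 1 else 0) * p j) - (\<Sum>p\<in>S0. (if p = eV r1 then 1 else 0) * p j))"
            unfolding c2_def by (simp add: algebra_simps sum.distrib sum_distrib_left sum_subtractf)
          also have "\<dots> = 0" using c(2) W(2,3) sum_ind[OF finS0 t1(1), of "\<lambda>p. p j"] sum_ind[OF finS0 t1(2), of "\<lambda>p. p j"] by simp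
          finally show ?thesis .
        qed
        have "c2 (eV r1) \<noteq> 0" using c(3) False eV_inj[of r1 r2] by (auto simp: c2_def)
        moreover have "\<forall>p\<in>S0. c2 p = 0" using ai s1 s2 unfolding aff_indep_def by blast
        ultimately show False using t1 by blast
      qed
    qed
  qed
  have max: "maximal_cell T S0"
    unfolding maximal_cell_def
  proof (intro conjI notI S0T)
    assume "\<exists>S'\<in>T. S0 \<subset> S'"
    then obtain k' where K': "Kc k'" and ss: "S0 \<subset> tight k'" by (auto simp: T_char)
    define g where "g u = \<alpha> u - k' (Inl u)" for u
    have gc: "\<forall>f\<in>D. g (src f) = g (tgt f)"
    proof
      fix f assume fD: "f \<in> D"
      have fE: "f \<in> E" using fD DE by blast
      have e1: "eE f \<in> S0" "eE f \<in> tight k'" "p f \<in> S0" "p f \<in> tight k'" using Dt[OF fD] ss by auto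
      show "g (src f) = g (tgt f)"
      proof (cases "p f = lft f")
        case True then show ?thesis using e1 tight_iff(2,4)[OF fE] by (auto simp: g_def S0_def)
      next
        case False then have "p f = rgt f" using pD fD by auto
        then show ?thesis using e1 tight_iff(2,5)[OF fE] by (auto simp: g_def S0_def)
      qed
    qed
    have geq: "k (Inl w) = k' (Inl w)" if w: "w \<in> V" for w
    proof -
      obtain u where u: "u \<in> V" "?R w u" "\<alpha> u = 0" using root[OF w] by blast
      have "eV u \<in> S0" using u tight_iff(1)[OF u(1), of k] by (simp add: S0_def)
      then have "eV u \<in> tight k'" using ss by blast
      then have "g u = 0" using u tight_iff(1)[OF u(1)] by (simp add: g_def)
      then show ?thesis using reach_const[OF gc u(2)] by (simp add: g_def)
    qed
    have feq: "k (Inr f) = k' (Inr f)" if f: "f \<in> E" for f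
    proof (cases "f \<in> E1")
      case True
      then have "til f \<in> S0" using sq f unfolding squiggly_def by blast
      then have "til f \<in> tight k'" "til f \<in> tight k" using ss by (auto simp: S0_def)
      moreover have "k (Inl (src f)) = k' (Inl (src f))" "k (Inl (tgt f)) = k' (Inl (tgt f))" using geq ends[OF f] by auto
      ultimately show ?thesis using tight_iff(3)[OF f, of k] tight_iff(3)[OF f, of k'] by simp
    next
      case False
      note e = ef[OF f]
      have "\<beta> f = 0 \<or> \<beta> f = H (lft f) - (\<alpha> (src f) - \<alpha> (tgt f)) \<or> \<beta> f = H (rgt f) + (\<alpha> (src f) - \<alpha> (tgt f))"
        using False by (simp add: \<beta>_def min_def)
      then have t1: "eE f \<in> tight k \<or> lft f \<in> tight k \<or> rgt f \<in> tight k"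
        using tight_iff(2,4,5)[OF f, of k] by auto
      then have t2: "eE f \<in> tight k' \<or> lft f \<in> tight k' \<or> rgt f \<in> tight k'" using ss by (auto simp: S0_def)
      have m1: "k (Inr f) = min 0 (min (H (lft f) - (k (Inl (src f)) - k (Inl (tgt f))))
                                 (H (rgt f) + (k (Inl (src f)) - k (Inl (tgt f)))))" using min_det[OF K f t1] .
      have m2: "k' (Inr f) = min 0 (min (H (lft f) - (k' (Inl (src f)) - k' (Inl (tgt f))))
                                 (H (rgt f) + (k' (Inl (src f)) - k' (Inl (tgt f)))))" using min_det[OF K' f t2] .
      have "k (Inl (src f)) = k' (Inl (src f))" "k (Inl (tgt f)) = k' (Inl (tgt f))" using geq ends[OF f] by auto
      then show ?thesis using m1 m2 by simp
    qed
    have "tight k = tight k'" using tight_eq[of k k'] geq feq by blast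
    then show False using ss by (simp add: S0_def)
  qed
  show ?thesis using max sq DinDS DSsub Dt by blast
qed

end


theorem mainTheorem6:
  fixes V :: "'v set" and E :: "'e set" and src tgt :: "'e \<Rightarrow> 'v"
    and T :: "('v,'e) pt set set" and E1 D :: "'e set" and p :: "'e \<Rightarrow> ('v,'e) pt"
  assumes "finite V" and "finite E"
    and "\<forall>f\<in>E. src f \<in> V \<and> tgt f \<in> V"
    and "good_triangulation V E src tgt T"
    and "E1 \<subseteq> E" and "D \<subseteq> E" and "E1 \<inter> D = {}"
    and "\<not> has_cycle src tgt D"
    and "\<forall>f\<in>D. p f \<in> {eLeft src tgt f, eRight src tgt f}"
  shows "(\<exists>!S. maximal_cell T S \<and> squiggly E src tgt S = E1 \<and> double_edges E src tgt S = D
              \<and> (\<forall>f\<in>D. p f \<in> S))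
         \<and> (\<forall>S. maximal_cell T S \<longrightarrow> \<not> has_cycle src tgt (double_edges E src tgt S))"
proof -
  obtain h where hT: "T = regular_subdivision V E (cosmo_points V E src tgt) h"
    and ind: "\<forall>S\<in>T. aff_indep S" and ms: "maximal_cell T (eV ` V \<union> eE ` E)"
    using assms(4) unfolding good_triangulation_def by blast
  have "eV ` V \<union> eE ` E \<in> T" using ms by (simp add: maximal_cell_def)
  then obtain c d where cd: "\<forall>p\<in>cosmo_points V E src tgt. Lk (Inl`V \<union> Inr`E) c p + d \<le> h p"
    "eV ` V \<union> eE ` E = {p\<in>cosmo_points V E src tgt. Lk (Inl`V \<union> Inr`E) c p + d = h p}"
    unfolding hT regular_subdivision_def Lk_def by blast
  interpret C: cosmo V E src tgt h c d
    using assms(1-3) cd ind hT by unfold_locales auto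
  have ex: "\<exists>S. maximal_cell T S \<and> squiggly E src tgt S = E1 \<and> double_edges E src tgt S = D
              \<and> (\<forall>f\<in>D. p f \<in> S)"
    using C.exist[OF assms(5-9)] hT by simp
  have un: "S1 = S2" if "maximal_cell T S1 \<and> squiggly E src tgt S1 = E1 \<and> double_edges E src tgt S1 = D
              \<and> (\<forall>f\<in>D. p f \<in> S1)" "maximal_cell T S2 \<and> squiggly E src tgt S2 = E1 \<and> double_edges E src tgt S2 = D
              \<and> (\<forall>f\<in>D. p f \<in> S2)" for S1 S2
    using C.unique[of S1 S2 D p] that assms(9) hT by auto
  have p2: "\<forall>S. maximal_cell T S \<longrightarrow> \<not> has_cycle src tgt (double_edges E src tgt S)"
    using C.acyc hT by (auto simp: maximal_cell_def)
  show ?thesis using ex un p2 by blast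
qed


end
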